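(* Let $S$ be a Stone relation algebra that is atomic, atom-rectangular and simple, and has finitely many atoms. Then $S$ is a relation algebra, that is, $\overline{\overline{x}}=x$ for all $x\in S$.
   Context: A Stone relation algebra is a structure $(S,\sqcup,\sqcap,\cdot,\overline{\,\cdot\,},{}^{\smile},\bot,\top,1)$ (write $xy$ for $x\cdot y$, $\overline{x}$ for the pseudocomplement, $x^{\smile}$ for the converse) such that: $(S,\sqcup,\sqcap,\bot,\top)$ is a bounded distributive lattice with order $x\sqsubseteq y\iff x\sqcup y=y$; $x\sqcap y=\bot\iff x\sqsubseteq\overline{y}$; $\overline{x}\sqcup\overline{\overline{x}}=\top$; $\cdot$ is associative with two-sided unit $1$, distributes over $\sqcup$ on both sides, and $\bot$ is a zero of $\cdot$; $x^{\smile\smile}=x$, $(xy)^{\smile}=y^{\smile}x^{\smile}$, $(x\sqcup y)^{\smile}=x^{\smile}\sqcup y^{\smile}$; $\overline{\overline{1}}=1$; $\overline{\overline{xy}}=\overline{\overline{x}}\,\overline{\overline{y}}$; $xy\sqcap z\sqsubseteq x(y\sqcap x^{\smile}z)$. A relation algebra is a Stone relation algebra with $\overline{\overline{x}}=x$ for all $x$. An atom is an element $x\neq\bot$ such that $\bot\neq y\sqsubseteq x$ implies $y=x$. An element $x$ is a rectangle if $x\top x\sqsubseteq x$ and simple if $\top x\top=\top$. $S$ is simple if every element other than $\bot$ is simple; atomic if every $x\neq\bot$ has an atom below it; atom-rectangular if every atom is a rectangle. *)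

theory Defs
  imports Main
begin

text \<open>The lattice operations are sup, inf, bot, top
with the lattice order (x \<le> y iff sup x y = y); composition is times,
the identity is one, the pseudocomplement is uminus and the converse is conv.\<close>

class conv =
  fixes conv :: "'a \<Rightarrow> 'a"

class stone_relation_algebra = bounded_lattice + distrib_lattice + times + one + uminus + conv +
  assumes pseudo_complement: "inf x y = bot \<longleftrightarrow> x \<le> - y"
  assumes stone: "sup (- x) (-(-x)) = top"
  assumes comp_assoc: "(x * y) * z = x * (y * z)"
  assumes comp_left_one: "1 * x = x"
  assumes comp_right_one: "x * 1 = x"
  assumes comp_left_dist_sup: "x * sup y z = sup (x * y) (x * z)"
  assumes comp_right_dist_sup: "sup x y * z = sup (x * z) (y * z)"
  assumes comp_left_zero: "bot * x = bot"
  assumes comp_right_zero: "x * bot = bot"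
  assumes conv_involutive: "conv (conv x) = x"
  assumes conv_dist_comp: "conv (x * y) = conv y * conv x"
  assumes conv_dist_sup: "conv (sup x y) = sup (conv x) (conv y)"
  assumes pp_one: "-(-(1::'a)) = 1"
  assumes pp_dist_comp: "-(-(x * y)) = (-(-x)) * (-(-y))"
  assumes dedekind_1: "inf (x * y) z \<le> x * inf y (conv x * z)"

definition atom :: "'a::stone_relation_algebra \<Rightarrow> bool" where
  "atom x \<longleftrightarrow> x \<noteq> bot \<and> (\<forall>y. y \<noteq> bot \<and> y \<le> x \<longrightarrow> y = x)"

definition rectangle :: "'a::stone_relation_algebra \<Rightarrow> bool" where
  "rectangle x \<longleftrightarrow> x * top * x \<le> x"

definition simple_elem :: "'a::stone_relation_algebra \<Rightarrow> bool" where
  "simple_elem x \<longleftrightarrow> top * x * top = top"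

definition simple_algebra :: "'a::stone_relation_algebra itself \<Rightarrow> bool" where
  "simple_algebra _ \<longleftrightarrow> (\<forall>x::'a. x \<noteq> bot \<longrightarrow> simple_elem x)"

definition atomic :: "'a::stone_relation_algebra itself \<Rightarrow> bool" where
  "atomic _ \<longleftrightarrow> (\<forall>x::'a. x \<noteq> bot \<longrightarrow> (\<exists>a. atom a \<and> a \<le> x))"

definition atom_rectangular :: "'a::stone_relation_algebra itself \<Rightarrow> bool" where
  "atom_rectangular _ \<longleftrightarrow> (\<forall>a::'a. atom a \<longrightarrow> rectangle a)"

end

theory Submission
  imports Defs
begin


lemma mult_left_mono': "(x::'a::stone_relation_algebra) \<le> y \<Longrightarrow> z * x \<le> z * y"
  by (metis comp_left_dist_sup le_iff_sup)

lemma mult_right_mono': "(x::'a::stone_relation_algebra) \<le> y \<Longrightarrow> x * z \<le> y * z"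
  by (metis comp_right_dist_sup le_iff_sup)

lemma conv_mono': "(x::'a::stone_relation_algebra) \<le> y \<Longrightarrow> conv x \<le> conv y"
  by (metis conv_dist_sup le_iff_sup)

lemma conv_le_iff: "conv (x::'a::stone_relation_algebra) \<le> y \<longleftrightarrow> x \<le> conv y"
  by (metis conv_involutive conv_mono')

lemma conv_bot': "conv (bot::'a::stone_relation_algebra) = bot"
  by (metis bot_least conv_le_iff bot_unique)

lemma conv_top': "conv (top::'a::stone_relation_algebra) = top"
  by (metis conv_le_iff top_greatest top_unique)

lemma conv_one': "conv (1::'a::stone_relation_algebra) = 1"
  by (metis comp_right_one conv_dist_comp conv_involutive)

lemma conv_inf': "conv (inf (x::'a::stone_relation_algebra) y) = inf (conv x) (conv y)"
proof (rule order.antisym)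
  show "conv (inf x y) \<le> inf (conv x) (conv y)"
    by (simp add: conv_mono')
  have "conv (inf (conv x) (conv y)) \<le> inf x y"
    by (metis conv_involutive conv_mono' inf_le1 inf_le2 le_inf_iff)
  then show "inf (conv x) (conv y) \<le> conv (inf x y)"
    by (metis conv_le_iff)
qed

lemma dedekind_2': "inf ((x::'a::stone_relation_algebra) * y) z \<le> (inf x (z * conv y)) * y"
proof -
  have "conv (inf (x * y) z) = inf (conv y * conv x) (conv z)"
    by (simp add: conv_inf' conv_dist_comp)
  also have "\<dots> \<le> conv y * inf (conv x) (conv (conv y) * conv z)"
    by (rule dedekind_1)
  also have "\<dots> = conv ((inf x (z * conv y)) * y)"
    by (simp add: conv_inf' conv_dist_comp conv_involutive)
  finally show ?thesis
    by (metis conv_le_iff conv_involutive)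
qed

lemma x_le_xcx: "(x::'a::stone_relation_algebra) \<le> x * conv x * x"
proof -
  have "x = inf (x * 1) x" by (simp add: comp_right_one)
  also have "\<dots> \<le> x * inf 1 (conv x * x)" by (rule dedekind_1)
  also have "\<dots> \<le> x * (conv x * x)" by (simp add: mult_left_mono')
  finally show ?thesis by (simp add: comp_assoc)
qed

lemma sub_conv: "(p::'a::stone_relation_algebra) \<le> 1 \<Longrightarrow> conv p = p"
proof -
  assume p: "p \<le> 1"
  have "p \<le> p * conv p * p" by (rule x_le_xcx)
  also have "\<dots> \<le> 1 * conv p * 1"
    by (meson mult_left_mono' mult_right_mono' order.trans p)
  finally have 1: "p \<le> conv p" by (simp add: comp_left_one comp_right_one)
  then have "conv p \<le> p" by (metis conv_le_iff)
  with 1 show ?thesis by simp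
qed

lemma sub_left: "(p::'a::stone_relation_algebra) \<le> 1 \<Longrightarrow> p * x \<le> x"
  by (metis comp_left_one mult_right_mono')

lemma sub_right: "(p::'a::stone_relation_algebra) \<le> 1 \<Longrightarrow> x * p \<le> x"
  by (metis comp_right_one mult_left_mono')

lemma pp_incr: "(x::'a::stone_relation_algebra) \<le> -(-x)"
proof -
  have "inf (-x) x = bot" using pseudo_complement[of "-x" x] by simp
  then have "inf x (-x) = bot" by (simp add: inf_commute)
  then show ?thesis by (simp only: pseudo_complement)
qed

lemma pp_neg_bot: "- (bot::'a::stone_relation_algebra) = top"
proof -
  have "top \<le> - (bot::'a)" using pseudo_complement[of top "bot::'a"] by simp
  then show ?thesis by (simp add: top_unique)
qed

lemma neg_top: "- (top::'a::stone_relation_algebra) = bot"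
proof -
  have "inf (- top) (top::'a) = bot" using pseudo_complement[of "- top" "top::'a"] by simp
  then show ?thesis by simp
qed

lemma pp_top: "-(-(top::'a::stone_relation_algebra)) = top"
  by (simp add: neg_top pp_neg_bot)

lemma neg_anti: "(x::'a::stone_relation_algebra) \<le> y \<Longrightarrow> - y \<le> - x"
proof -
  assume "x \<le> y"
  then have "inf (- y) x \<le> inf (- y) y" by (simp add: inf.coboundedI2)
  also have "inf (- y) y = bot" using pseudo_complement[of "- y" y] by simp
  finally have "inf (- y) x = bot" by (rule le_bot)
  then show ?thesis by (simp only: pseudo_complement)
qed

lemma pp_mono2: "(x::'a::stone_relation_algebra) \<le> y \<Longrightarrow> -(-x) \<le> -(-y)"
  by (simp add: neg_anti)

lemma atom_conv: "atom (a::'a::stone_relation_algebra) \<Longrightarrow> atom (conv a)"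
proof -
  assume a: "atom a"
  have a1: "a \<noteq> bot" using a by (simp add: atom_def)
  have a2: "\<And>y. y \<noteq> bot \<Longrightarrow> y \<le> a \<Longrightarrow> y = a" using a by (simp add: atom_def)
  have c1: "conv a \<noteq> bot"
  proof
    assume "conv a = bot"
    then have "conv (conv a) = conv bot" by (rule arg_cong)
    then have "a = bot" by (simp only: conv_involutive conv_bot')
    then show False using a1 by simp
  qed
  have c2: "y = conv a" if "y \<noteq> bot" "y \<le> conv a" for y
  proof -
    have "conv y \<le> a" using that(2) by (simp only: conv_le_iff)
    moreover have "conv y \<noteq> bot"
    proof
      assume "conv y = bot"
      then have "conv (conv y) = conv bot" by (rule arg_cong)
      then have "y = bot" by (simp only: conv_involutive conv_bot')
      then show False using that(1) by simp
    qed
    ultimately have "conv y = a" using a2 by simp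
    then have "conv (conv y) = conv a" by (rule arg_cong)
    then show ?thesis by (simp only: conv_involutive)
  qed
  show ?thesis unfolding atom_def using c1 c2 by simp
qed

lemma sub_atom_regular:
  assumes "atom (p::'a::stone_relation_algebra)" "p \<le> 1" "rectangle p" "simple_elem p"
  shows "-(-p) = p"
proof -
  let ?q = "-(-p)"
  have q1: "?q \<le> 1" using pp_mono2[of p 1, OF assms(2)] pp_one by (rule ord_le_eq_trans)
  have pq: "p \<le> ?q" by (rule pp_incr)
  have ptp: "p * top * p = p"
  proof (rule order.antisym)
    show "p * top * p \<le> p" using assms(3) by (simp add: rectangle_def)
    have "p \<le> p * conv p * p" by (rule x_le_xcx)
    also have "\<dots> \<le> p * top * p" by (simp add: mult_left_mono' mult_right_mono')
    finally show "p \<le> p * top * p" .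
  qed
  have "?q * top * ?q = -(-(p * top * p))" by (simp only: pp_dist_comp pp_top)
  also have "\<dots> = ?q" by (simp only: ptp)
  finally have qtq: "?q * top * ?q = ?q" .
  have a1: "?q * top * p \<le> p"
  proof -
    have "?q * top * p \<le> ?q * top * ?q" by (rule mult_left_mono'[OF pq])
    also have "\<dots> = ?q" by (rule qtq)
    also have "\<dots> \<le> 1" by (rule q1)
    finally have "?q * top * p \<le> 1" .
    then have "?q * top * p = inf (?q * top * p) 1" by (simp add: inf.absorb1)
    also have "\<dots> \<le> inf (?q * top) (1 * conv p) * p" by (rule dedekind_2')
    also have "\<dots> \<le> conv p * p" by (simp add: comp_left_one mult_right_mono')
    also have "\<dots> \<le> p" using sub_conv[OF assms(2)] sub_left[OF assms(2), of p] by simp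
    finally show ?thesis .
  qed
  have a2: "p * top * ?q \<le> p"
  proof -
    have "p * top * ?q \<le> ?q * top * ?q" by (intro mult_right_mono' pq)
    also have "\<dots> = ?q" by (rule qtq)
    also have "\<dots> \<le> 1" by (rule q1)
    finally have "p * top * ?q \<le> 1" .
    then have "p * top * ?q = inf (p * (top * ?q)) 1" by (simp add: inf.absorb1 comp_assoc)
    also have "\<dots> \<le> p * inf (top * ?q) (conv p * 1)" by (rule dedekind_1)
    also have "\<dots> \<le> p * conv p" by (simp add: comp_right_one mult_left_mono')
    also have "\<dots> \<le> p" using sub_conv[OF assms(2)] sub_right[OF assms(2), of p] by simp
    finally show ?thesis .
  qed
  have tpt: "top * p * top = top" using assms(4) by (simp only: simple_elem_def)
  have "?q = ?q * top * ?q" by (rule qtq[symmetric])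
  also have "\<dots> = ?q * (top * p * top) * ?q" by (simp only: tpt)
  also have "\<dots> = (?q * top * p) * top * ?q" by (simp add: comp_assoc)
  also have "\<dots> \<le> p * top * ?q" by (intro mult_right_mono' a1)
  also have "\<dots> \<le> p" by (rule a2)
  finally show ?thesis using pq by (rule order.antisym)
qed

lemma neg_sup: "- sup (x::'a::stone_relation_algebra) y = inf (- x) (- y)"
proof (rule order.antisym)
  show "- sup x y \<le> inf (- x) (- y)" by (simp add: neg_anti)
  have hx: "inf (- x) x = bot" using pseudo_complement[of "- x" x] by simp
  have hy: "inf (- y) y = bot" using pseudo_complement[of "- y" y] by simp
  have "inf (inf (- x) (- y)) (sup x y) = sup (inf (inf (- x) (- y)) x) (inf (inf (- x) (- y)) y)"
    by (rule inf_sup_distrib1)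
  also have "inf (inf (- x) (- y)) x \<le> inf (- x) x" by (meson inf_le1 inf_mono order_refl)
  then have "inf (inf (- x) (- y)) x \<le> bot" using hx by simp
  then have "inf (inf (- x) (- y)) x = bot" by (rule le_bot)
  also have "inf (inf (- x) (- y)) y \<le> inf (- y) y" by (meson inf_le2 inf_mono order_refl)
  then have "inf (inf (- x) (- y)) y \<le> bot" using hy by simp
  then have "inf (inf (- x) (- y)) y = bot" by (rule le_bot)
  finally have "inf (inf (- x) (- y)) (sup x y) = bot" by simp
  then show "inf (- x) (- y) \<le> - sup x y" by (simp only: pseudo_complement)
qed

lemma p_le_pa: "(a::'a::stone_relation_algebra) \<le> inf 1 (a * conv a) * a"
proof -
  have "a = inf (1 * a) a" by (simp add: comp_left_one)
  also have "\<dots> \<le> inf 1 (a * conv a) * a" by (rule dedekind_2')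
  finally show ?thesis .
qed

lemma a_le_ar: "(a::'a::stone_relation_algebra) \<le> a * inf 1 (conv a * a)"
proof -
  have "a = inf (a * 1) a" by (simp add: comp_right_one)
  also have "\<dots> \<le> a * inf 1 (conv a * a)" by (rule dedekind_1)
  finally show ?thesis .
qed

lemma dom_atom:
  assumes a: "atom (a::'a::stone_relation_algebra)"
  shows "atom (inf 1 (a * conv a))"
proof -
  let ?p = "inf 1 (a * conv a)"
  have a1: "a \<noteq> bot" using a by (simp add: atom_def)
  have a2: "\<And>y. y \<noteq> bot \<Longrightarrow> y \<le> a \<Longrightarrow> y = a" using a by (simp add: atom_def)
  have c1: "?p \<noteq> bot"
  proof
    assume "?p = bot"
    then have "a \<le> bot * a" using p_le_pa[of a] by simp
    then have "a \<le> bot" by (simp add: comp_left_zero)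
    then have "a = bot" by (rule le_bot)
    then show False using a1 by simp
  qed
  have c2: "y = ?p" if y0: "y \<noteq> bot" and yp: "y \<le> ?p" for y
  proof -
    have y1: "y \<le> 1" using yp by simp
    have ya: "y \<le> a * conv a" using yp by simp
    have cy: "conv y = y" by (rule sub_conv[OF y1])
    have "y = inf (a * conv a) y" using ya by (simp add: inf.absorb2)
    also have "\<dots> \<le> a * inf (conv a) (conv a * y)" by (rule dedekind_1)
    also have "\<dots> \<le> a * (conv a * y)" by (simp add: mult_left_mono')
    also have "conv a * y = conv (y * a)" by (simp add: conv_dist_comp cy)
    finally have yle: "y \<le> a * conv (y * a)" .
    have "y * a \<noteq> bot"
    proof
      assume "y * a = bot"
      then have "y \<le> bot" using yle by (simp add: conv_bot' comp_right_zero)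
      then have "y = bot" by (rule le_bot)
      then show False using y0 by simp
    qed
    moreover have "y * a \<le> a" by (rule sub_left[OF y1])
    ultimately have yaa: "y * a = a" using a2 by simp
    have "?p = inf (y * (a * conv a)) 1" using yaa by (simp add: comp_assoc[symmetric] inf_commute)
    also have "\<dots> \<le> y * inf (a * conv a) (conv y * 1)" by (rule dedekind_1)
    also have "\<dots> \<le> y * conv y" by (simp add: comp_right_one mult_left_mono')
    also have "\<dots> \<le> conv y" by (rule sub_left[OF y1])
    finally have "?p \<le> y" using cy by simp
    then show ?thesis using yp by (rule order.antisym[rotated])
  qed
  show ?thesis unfolding atom_def using c1 c2 by blast
qed

lemma atom_regular:
  assumes ar: "atom_rectangular TYPE('a::stone_relation_algebra)"
    and sa: "simple_algebra TYPE('a)"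
    and a: "atom (a::'a)"
  shows "-(-a) = a"
proof -
  let ?p = "inf 1 (a * conv a)"
  let ?r = "inf 1 (conv a * a)"
  have pa: "atom ?p" by (rule dom_atom[OF a])
  have "atom (inf 1 (conv a * conv (conv a)))" by (rule dom_atom[OF atom_conv[OF a]])
  then have ra: "atom ?r" by (simp only: conv_involutive)
  have rect: "\<And>b::'a. atom b \<Longrightarrow> rectangle b" using ar by (simp add: atom_rectangular_def)
  have simp_e: "\<And>b::'a. atom b \<Longrightarrow> simple_elem b"
    using sa by (simp add: simple_algebra_def atom_def)
  have pr: "-(-?p) = ?p" by (rule sub_atom_regular[OF pa inf_le1 rect[OF pa] simp_e[OF pa]])
  have rr: "-(-?r) = ?r" by (rule sub_atom_regular[OF ra inf_le1 rect[OF ra] simp_e[OF ra]])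
  have "a \<le> ?p * a" by (rule p_le_pa)
  also have "\<dots> \<le> ?p * (a * ?r)" by (intro mult_left_mono' a_le_ar)
  also have "\<dots> \<le> ?p * (top * ?r)" by (intro mult_left_mono' mult_right_mono' top_greatest)
  finally have "a \<le> ?p * top * ?r" by (simp add: comp_assoc)
  then have "-(-a) \<le> -(-(?p * top * ?r))" by (rule pp_mono2)
  also have "-(-(?p * top * ?r)) = ?p * top * ?r" by (simp only: pp_dist_comp pp_top pr rr)
  finally have b1: "-(-a) \<le> ?p * top * ?r" .
  have "?p * top * ?r = ?p * (top * ?r)" by (simp add: comp_assoc)
  also have "\<dots> \<le> ?p * top" by (intro mult_left_mono' top_greatest)
  also have "\<dots> \<le> (a * conv a) * top" by (intro mult_right_mono' inf_le2)
  also have "\<dots> = a * (conv a * top)" by (simp add: comp_assoc)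
  also have "\<dots> \<le> a * top" by (intro mult_left_mono' top_greatest)
  finally have b2: "?p * top * ?r \<le> a * top" .
  have "?p * top * ?r \<le> top * ?r" by (intro mult_right_mono' top_greatest)
  also have "\<dots> \<le> top * (conv a * a)" by (intro mult_left_mono' inf_le2)
  also have "\<dots> = (top * conv a) * a" by (simp add: comp_assoc)
  also have "\<dots> \<le> top * a" by (intro mult_right_mono' top_greatest)
  finally have b3: "?p * top * ?r \<le> top * a" .
  have "inf (a * top) (top * a) \<le> a * inf top (conv a * (top * a))" by (rule dedekind_1)
  also have "\<dots> \<le> a * ((conv a * top) * a)" by (simp add: comp_assoc mult_left_mono')
  also have "\<dots> \<le> a * (top * a)" by (intro mult_left_mono' mult_right_mono' top_greatest)
  also have "\<dots> \<le> a"
  proof -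
    have "rectangle a" using ar a by (simp add: atom_rectangular_def)
    then show ?thesis by (simp add: rectangle_def comp_assoc)
  qed
  finally have b4: "inf (a * top) (top * a) \<le> a" .
  have "-(-a) \<le> inf (a * top) (top * a)" using b1 b2 b3 by (meson le_inf_iff order.trans)
  then have "-(-a) \<le> a" using b4 by (rule order.trans)
  then show ?thesis using pp_incr[of a] by (rule order.antisym)
qed

lemma regular_atom_sup: "-(-(a::'a::stone_relation_algebra)) = a \<Longrightarrow> sup a (- a) = top"
  by (metis stone sup_commute)

theorem mainTheorem6:
  assumes "atomic TYPE('a::stone_relation_algebra)"
    and "atom_rectangular TYPE('a)"
    and "simple_algebra TYPE('a)"
    and "finite {a::'a. atom a}"
  shows "\<forall>x::'a. -(-x) = x"
proof
  fix x :: 'a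
  let ?d = "sup x (- x)"
  have atd: "a \<le> ?d" if "atom a" for a
  proof (cases "inf a x = bot")
    case True
    then have "a \<le> - x" by (simp only: pseudo_complement)
    then show ?thesis by (simp add: le_supI2)
  next
    case False
    moreover have "inf a x \<le> a" by simp
    ultimately have "inf a x = a" using that by (simp add: atom_def)
    then have "a \<le> x" by (simp add: inf.absorb_iff1)
    then show ?thesis by (simp add: le_supI1)
  qed
  have ind: "finite B \<Longrightarrow> B \<subseteq> {a::'a. atom a} \<Longrightarrow>
      \<exists>s. sup s (- s) = top \<and> s \<le> ?d \<and> (\<forall>a\<in>B. a \<le> s)" for B
  proof (induction B rule: finite_induct)
    case empty
    show ?case by (rule exI[of _ bot]) (simp add: pp_neg_bot)
    next
    case (insert b F)
    then obtain s where s1: "sup s (- s) = top" and s2: "s \<le> ?d" and s3: "\<forall>a\<in>F. a \<le> s" by auto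
    have bat: "atom b" using insert.prems by simp
    have br: "sup b (- b) = top" by (rule regular_atom_sup[OF atom_regular[OF assms(2) assms(3) bat]])
    have "sup (sup s b) (- sup s b) = sup (sup s b) (inf (- s) (- b))" by (simp only: neg_sup)
    also have "\<dots> = inf (sup (sup s b) (- s)) (sup (sup s b) (- b))" by (rule sup_inf_distrib1)
    also have "sup (sup s b) (- s) = top" using s1 by (metis sup_assoc sup_commute sup_top_left)
    also have "sup (sup s b) (- b) = top" using br by (metis sup_assoc sup_top_right)
    finally have t1: "sup (sup s b) (- sup s b) = top" by simp
    have t2: "sup s b \<le> ?d" using s2 atd[OF bat] by simp
    have t3: "\<forall>a\<in>insert b F. a \<le> sup s b" using s3 by (auto simp add: le_supI1)
    show ?case using t1 t2 t3 by blast
  qed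
  obtain s where s1: "sup s (- s) = top" and s2: "s \<le> ?d" and s3: "\<forall>a. atom a \<longrightarrow> a \<le> s"
    using ind[OF assms(4)] by auto
  have "- s = bot"
  proof (rule ccontr)
    assume "- s \<noteq> bot"
    then obtain c where c1: "atom c" and c2: "c \<le> - s" using assms(1) by (auto simp add: atomic_def)
    have "c \<le> s" using s3 c1 by simp
    then have "c \<le> inf s (- s)" using c2 by simp
    also have "inf s (- s) = bot" using pseudo_complement[of s "- s"] pp_incr[of s] by simp
    finally have "c = bot" by (rule le_bot)
    then show False using c1 by (simp add: atom_def)
  qed
  then have "s = top" using s1 by simp
  then have dt: "?d = top" using s2 by (simp add: top_unique)
  have "-(-x) = inf (-(-x)) ?d" using dt by simp
  also have "\<dots> = sup (inf (-(-x)) x) (inf (-(-x)) (- x))" by (rule inf_sup_distrib1)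
  also have "inf (-(-x)) x = x" using pp_incr[of x] by (simp add: inf.absorb2)
  also have "inf (-(-x)) (- x) = bot" using pseudo_complement[of "-(-x)" "- x"] by simp
  finally show "-(-x) = x" by simp
qed

end
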